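(* In the Cucker–Smale setting below, for all $i,j=1,\dots,N$, every unit vector $v\in\mathbb{R}^d$ and every $n\in\mathbb{N}_0$, $$\langle v_i(t)-v_j(t),v\rangle\le e^{-\tilde K(t-\bar t)}\langle v_i(\bar t)-v_j(\bar t),v\rangle+\big(1-e^{-\tilde K(t-\bar t)}\big)d_V(t_{2n})$$ for all $t_{2n+1}>t\ge\bar t\ge t_{2n}$.
   Context: Setting: $N\ge2$; $\tilde\psi:\mathbb{R}\to\mathbb{R}$ positive, bounded, continuous, with $\tilde K:=\|\tilde\psi\|_\infty$ and $\int_0^\infty\min_{r\in[0,x]}\tilde\psi(r)dx=+\infty$; $\{t_n\}_{n\in\mathbb{N}_0}$ increasing, nonnegative, $t_0=0$, $t_n\to\infty$, with $t_{2n+2}-t_{2n+1}<\frac{\ln2}{\tilde K}$ and $t_{2n+1}-t_{2n}>\frac1{\tilde K}$ for all $n$, and $\sum_{p\ge0}\ln\frac{e^{\tilde K(t_{2p+2}-t_{2p+1})}}{2-e^{\tilde K(t_{2p+2}-t_{2p+1})}}<\infty$. $\alpha(0)=1$, $\alpha=1$ on $(t_{2n},t_{2n+1})$, $\alpha=-1$ on $[t_{2n+1},t_{2n+2}]$. $\{(x_i,v_i)\}$ solves $x_i'=v_i$, $v_i'(t)=\frac1{N-1}\sum_{j\ne i}\alpha(t)\tilde\psi(|x_i(t)-x_j(t)|)(v_j(t)-v_i(t))$, $t>0$, with given initial data in $\mathbb{R}^d$ (continuous, $C^1$ on each $(t_n,t_{n+1})$). $d_V(t):=\max_{i,j}|v_i(t)-v_j(t)|$.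 *)

theory Defs
  imports "HOL-Analysis.Analysis"
begin

definition cs_alpha :: "(nat \<Rightarrow> real) \<Rightarrow> real \<Rightarrow> real" where
  "cs_alpha ts t = (if \<exists>n. ts (2*n+1) \<le> t \<and> t \<le> ts (2*n+2) then -1 else 1)"

definition cs_dV :: "nat \<Rightarrow> (nat \<Rightarrow> real \<Rightarrow> 'a::real_normed_vector) \<Rightarrow> real \<Rightarrow> real" where
  "cs_dV N v t = Max {norm (v i t - v j t) | i j. i \<in> {1..N} \<and> j \<in> {1..N}}"

end

theory Submission
  imports Defs
begin
lemma inner_deriv:
  assumes "(v has_vector_derivative D) (at t)"
  shows "((\<lambda>s. inner (v s) u) has_real_derivative inner D u) (at t)"
proof -
  have "((\<lambda>s. inner (v s) u) has_derivative (\<lambda>h. inner (h *\<^sub>R D) u)) (at t)"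
    using bounded_linear.has_derivative[OF bounded_linear_inner_left assms[unfolded has_vector_derivative_def]] .
  moreover have "(\<lambda>h. inner (h *\<^sub>R D) u) = (*) (inner D u)" by (auto simp: fun_eq_iff)
  ultimately show ?thesis
    by (simp add: has_field_derivative_def)
qed

lemma max_principle:
  fixes f f' :: "nat \<Rightarrow> real \<Rightarrow> real" and I :: "nat set"
  assumes fin: "finite I" and ne: "I \<noteq> {}"
   and cont: "\<And>k. k\<in>I \<Longrightarrow> continuous_on {a..b} (f k)"
   and der: "\<And>k s. k\<in>I \<Longrightarrow> a<s \<Longrightarrow> s<b \<Longrightarrow> (f k has_real_derivative f' k s) (at s)"
   and sgn: "\<And>k s. k\<in>I \<Longrightarrow> a<s \<Longrightarrow> s<b \<Longrightarrow> (\<And>l. l\<in>I \<Longrightarrow> f l s \<le> f k s) \<Longrightarrow> f' k s \<le> 0"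
   and M: "\<And>l. l\<in>I \<Longrightarrow> f l a \<le> M"
   and k: "k \<in> I" and t: "a \<le> t" "t < b"
  shows "f k t \<le> M"
proof -
  have key: "f k t \<le> M + e*(1+t-a)" if e: "e>0" for e
  proof (rule ccontr)
    assume nk: "\<not> ?thesis"
    define g where "g l s = f l s - M - e*(1+s-a)" for l s
    define S where "S = (\<Union>l\<in>I. {a..b} \<inter> g l -` {0..})"
    have tS: "t \<in> S" using nk k t unfolding S_def g_def by (auto intro!: bexI[of _ k])
    have gc: "continuous_on {a..b} (g l)" if "l\<in>I" for l
      unfolding g_def by (intro continuous_intros cont that)
    have cS: "closed S" unfolding S_def
      by (intro closed_UN fin ballI continuous_closed_preimage gc) auto
    have bS: "bdd_below S" unfolding S_def by (auto intro!: bdd_belowI[of _ a])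
    define s where "s = Inf S"
    have sS: "s \<in> S" unfolding s_def using closed_contains_Inf[OF _ bS cS] tS by auto
    have st: "s \<le> t" unfolding s_def using cInf_lower[OF tS bS] .
    from sS obtain k0 where k0: "k0 \<in> I" "g k0 s \<ge> 0" "a \<le> s" "s \<le> b" unfolding S_def by auto
    have "s \<noteq> a" proof
      assume "s = a" then have "g k0 s = f k0 a - M - e" unfolding g_def by simp
      with M[OF k0(1)] e k0(2) show False by simp
    qed
    with k0 have as: "a < s" by simp
    have sb: "s < b" using st t by simp
    define m where "m = Max ((\<lambda>l. g l s) ` I)"
    have "m \<in> (\<lambda>l. g l s) ` I" unfolding m_def using fin ne by (intro Max_in) auto
    then obtain km where km: "km \<in> I" "g km s = m" by auto
    have mx: "g l s \<le> g km s" if "l \<in> I" for l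
    proof -
      have "g l s \<le> m" unfolding m_def using fin that by (intro Max_ge) auto
      then show ?thesis using km(2) by simp
    qed
    have "g km s \<ge> 0" using mx[OF k0(1)] k0(2) by simp
    have fle: "f l s \<le> f km s" if "l\<in>I" for l using mx[OF that] unfolding g_def by simp
    have f'0: "f' km s \<le> 0" using sgn[OF km(1) as sb fle] by blast
    have gd: "((g km) has_real_derivative (f' km s - e)) (at s)"
      unfolding g_def[abs_def] by (auto intro!: derivative_eq_intros der[OF km(1) as sb])
    obtain d where d: "d > 0" "\<forall>h>0. h < d \<longrightarrow> g km s < g km (s - h)"
      using DERIV_neg_dec_left[OF gd] f'0 e by auto
    define h where "h = min d (s-a) / 2"
    have h: "h > 0" "h < d" "h \<le> s - a" using d as unfolding h_def by auto
    have "g km (s-h) > 0" using d(2) h \<open>g km s \<ge> 0\<close> by force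
    then have "s - h \<in> S" unfolding S_def using km(1) h k0 by (auto intro!: bexI[of _ km])
    then have "s \<le> s - h" unfolding s_def using cInf_lower[OF _ bS] by blast
    then show False using h by simp
  qed
  show ?thesis
  proof (rule ccontr)
    assume "\<not> ?thesis"
    then have pos: "f k t - M > 0" by simp
    have p2: "1 + t - a > 0" using t by simp
    define e where "e = (f k t - M) / (2*(1+t-a))"
    have "e > 0" unfolding e_def using pos p2 by simp
    have "e*(1+t-a) = (f k t - M)/2" unfolding e_def using p2 by (simp add: field_simps)
    then show False using key[OF \<open>e>0\<close>] pos by simp
  qed
qed

lemma lin_gronwall:
  fixes w w' :: "real \<Rightarrow> real"
  assumes ab: "a \<le> b" and cont: "continuous_on {a..b} w"
    and der: "\<And>s. a<s \<Longrightarrow> s<b \<Longrightarrow> (w has_real_derivative w' s) (at s)"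
    and bd: "\<And>s. a<s \<Longrightarrow> s<b \<Longrightarrow> w' s \<le> K*(C - w s)"
  shows "w b \<le> exp(-K*(b-a)) * w a + (1 - exp(-K*(b-a))) * C"
proof -
  define h where "h s = exp (K*(s-a)) * (w s - C)" for s
  have "h b \<le> h a"
  proof (rule DERIV_nonpos_imp_decreasing_open[OF ab])
    fix s assume s: "a < s" "s < b"
    have "(h has_real_derivative (exp (K*(s-a)) * K * (w s - C) + exp (K*(s-a)) * w' s)) (at s)"
      unfolding h_def[abs_def] by (auto intro!: derivative_eq_intros der[OF s])
    moreover have "exp (K*(s-a)) * K * (w s - C) + exp (K*(s-a)) * w' s \<le> 0"
    proof -
      have "exp (K*(s-a)) * K * (w s - C) + exp (K*(s-a)) * w' s
          = exp (K*(s-a)) * (w' s - K*(C - w s))" by (simp add: algebra_simps)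
      also have "\<dots> \<le> 0" using bd[OF s] by (simp add: mult_nonneg_nonpos)
      finally show ?thesis .
    qed
    ultimately show "\<exists>y. (h has_real_derivative y) (at s) \<and> y \<le> 0" by blast
  next
    show "continuous_on {a..b} h" unfolding h_def by (intro continuous_intros cont)
  qed
  then have "exp (K*(b-a)) * (w b - C) \<le> w a - C" unfolding h_def by simp
  then have "exp (-K*(b-a)) * (exp (K*(b-a)) * (w b - C)) \<le> exp (-K*(b-a)) * (w a - C)"
    by (intro mult_left_mono) auto
  then have "w b - C \<le> exp (-K*(b-a)) * (w a - C)"
    by (simp add: mult.assoc[symmetric] exp_add[symmetric])
  then show ?thesis by (simp add: algebra_simps)
qed

theorem proposition7p9:
  fixes N :: nat and psi :: "real \<Rightarrow> real" and K :: real
    and ts :: "nat \<Rightarrow> real"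
    and x v :: "nat \<Rightarrow> real \<Rightarrow> 'a::euclidean_space"
  assumes N2: "N \<ge> 2"
    and psi_pos: "\<And>r. psi r > 0"
    and psi_bdd: "bdd_above (range psi)"
    and psi_cont: "continuous_on UNIV psi"
    and K_def: "K = (SUP r. \<bar>psi r\<bar>)"
    and psi_int: "filterlim (\<lambda>X. integral {0..X} (\<lambda>s. Inf (psi ` {0..s}))) at_top at_top"
    and ts_mono: "strict_mono ts"
    and ts_nonneg: "\<And>n. ts n \<ge> 0"
    and ts0: "ts 0 = 0"
    and ts_lim: "filterlim ts at_top sequentially"
    and gap_neg: "\<And>n. ts (2*n+2) - ts (2*n+1) < ln 2 / K"
    and gap_pos: "\<And>n. ts (2*n+1) - ts (2*n) > 1 / K"
    and sum_cond: "summable (\<lambda>p. ln (exp (K * (ts (2*p+2) - ts (2*p+1)))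
                          / (2 - exp (K * (ts (2*p+2) - ts (2*p+1))))))"
    and x_cont: "\<And>i. i \<in> {1..N} \<Longrightarrow> continuous_on {0..} (x i)"
    and v_cont: "\<And>i. i \<in> {1..N} \<Longrightarrow> continuous_on {0..} (v i)"
    and x_deriv: "\<And>i n t. i \<in> {1..N} \<Longrightarrow> t \<in> {ts n <..< ts (Suc n)} \<Longrightarrow>
                    (x i has_vector_derivative v i t) (at t)"
    and v_deriv: "\<And>i n t. i \<in> {1..N} \<Longrightarrow> t \<in> {ts n <..< ts (Suc n)} \<Longrightarrow>
                    (v i has_vector_derivative
                      (1 / real (N - 1)) *\<^sub>R
                        (\<Sum>j\<in>{1..N} - {i}. (cs_alpha ts t * psi (norm (x i t - x j t)))
                                               *\<^sub>R (v j t - v i t))) (at t)"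
  shows "\<forall>i\<in>{1..N}. \<forall>j\<in>{1..N}. \<forall>u. norm u = 1 \<longrightarrow> (\<forall>n t tb.
           ts (2*n) \<le> tb \<and> tb \<le> t \<and> t < ts (2*n+1) \<longrightarrow>
           inner (v i t - v j t) u
             \<le> exp (- K * (t - tb)) * inner (v i tb - v j tb) u
               + (1 - exp (- K * (t - tb))) * cs_dV N v (ts (2*n)))"
proof (intro ballI allI impI)
  fix i j u n t tb
  assume i: "i \<in> {1..N}" and j: "j \<in> {1..N}" and u: "norm (u::'a) = 1"
    and tt: "ts (2*n) \<le> tb \<and> tb \<le> t \<and> t < ts (2*n+1)"
  define I where "I = {1..N}"
  define a where "a = ts (2*n)"
  define b where "b = ts (2*n+1)"
  have ab: "a \<le> tb" "tb \<le> t" "t < b" using tt unfolding a_def b_def by auto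
  have a0: "a \<ge> 0" unfolding a_def using ts_nonneg by simp
  have finI: "finite I" and neI: "I \<noteq> {}" unfolding I_def using N2 by auto
  have cardI: "\<And>k. k \<in> I \<Longrightarrow> real (card (I - {k})) = real N - 1"
    unfolding I_def using N2 by (simp add: of_nat_diff)
  have psiK: "psi r \<le> K" for r
  proof -
    have "range (\<lambda>r. \<bar>psi r\<bar>) = range psi" using psi_pos by (simp add: abs_of_pos)
    then have "bdd_above (range (\<lambda>r. \<bar>psi r\<bar>))" using psi_bdd by simp
    then have "\<bar>psi r\<bar> \<le> K" unfolding K_def by (rule cSUP_upper[OF UNIV_I])
    then show ?thesis by simp
  qed
  have K0: "K \<ge> 0" using psiK[of 0] psi_pos[of 0] by simp
  have alpha1: "cs_alpha ts s = 1" if s: "a < s" "s < b" for s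
  proof -
    have "\<not> (ts (2*m+1) \<le> s \<and> s \<le> ts (2*m+2))" for m
    proof (cases "m < n")
      case True
      then have "ts (2*m+2) \<le> a" unfolding a_def using ts_mono
        by (simp add: strict_mono_less_eq)
      then show ?thesis using s by simp
    next
      case False
      then have "b \<le> ts (2*m+1)" unfolding b_def using ts_mono
        by (simp add: strict_mono_less_eq)
      then show ?thesis using s by simp
    qed
    then show ?thesis unfolding cs_alpha_def by auto
  qed
  define f where "f w k s = inner (v k s) w" for w k s
  define fd where "fd w k s = 1 / (real N - 1) *
      (\<Sum>l\<in>I - {k}. psi (norm (x k s - x l s)) * (f w l s - f w k s))" for w k s
  have fder: "(f w k has_real_derivative fd w k s) (at s)"
    if k: "k \<in> I" and s: "a < s" "s < b" for w k s
  proof -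
    have "s \<in> {ts (2*n) <..< ts (Suc (2*n))}" using s unfolding a_def b_def by simp
    from inner_deriv[OF v_deriv[OF k[unfolded I_def] this], of w]
    show ?thesis
      unfolding f_def[abs_def] fd_def alpha1[OF s] I_def using N2
      by (simp add: inner_sum_left inner_diff_left of_nat_diff)
  qed
  have fcont: "continuous_on {a..b} (f w k)" if "k \<in> I" for w k
  proof -
    have "continuous_on {a..b} (v k)"
      by (rule continuous_on_subset[OF v_cont[of k]]) (use that a0 in \<open>auto simp: I_def\<close>)
    then show ?thesis unfolding f_def[abs_def] by (intro continuous_intros)
  qed
  define Mx where "Mx w = Max ((\<lambda>l. f w l a) ` I)" for w
  have maxp: "f w k s \<le> Mx w" if "k \<in> I" "a \<le> s" "s < b" for w k s
  proof (rule max_principle[OF finI neI fcont, where f' = "fd w"])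
    fix k s assume k: "k \<in> I" and s: "a < s" "s < b"
    show "(f w k has_real_derivative fd w k s) (at s)" by (rule fder[OF k s])
    assume le: "\<And>l. l \<in> I \<Longrightarrow> f w l s \<le> f w k s"
    have "(\<Sum>l\<in>I - {k}. psi (norm (x k s - x l s)) * (f w l s - f w k s)) \<le> 0"
      using le psi_pos by (intro sum_nonpos) (simp add: mult_nonneg_nonpos less_imp_le)
    moreover have "1 / (real N - 1) \<ge> 0" using N2 by simp
    ultimately show "fd w k s \<le> 0" unfolding fd_def by (rule mult_nonneg_nonpos[rotated])
  next
    fix l assume "l \<in> I"
    then show "f w l a \<le> Mx w" unfolding Mx_def using finI by (intro Max_ge) auto
  qed (use that in auto)
  have fdbound: "fd w k s \<le> K * (Mx w - f w k s)" if k: "k \<in> I" and s: "a < s" "s < b" for w k s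
  proof -
    have nn: "Mx w - f w k s \<ge> 0" using maxp[OF k] s by simp
    have "(\<Sum>l\<in>I - {k}. psi (norm (x k s - x l s)) * (f w l s - f w k s))
        \<le> (\<Sum>l\<in>I - {k}. K * (Mx w - f w k s))"
    proof (rule sum_mono)
      fix l assume l: "l \<in> I - {k}"
      have "f w l s \<le> Mx w" using maxp[of l] l s by simp
      then have "psi (norm (x k s - x l s)) * (f w l s - f w k s)
          \<le> psi (norm (x k s - x l s)) * (Mx w - f w k s)"
        using psi_pos by (intro mult_left_mono) (auto simp: less_imp_le)
      also have "\<dots> \<le> K * (Mx w - f w k s)"
        using psiK nn by (intro mult_right_mono) auto
      finally show "psi (norm (x k s - x l s)) * (f w l s - f w k s) \<le> K * (Mx w - f w k s)" .
    qed
    also have "\<dots> = (real N - 1) * (K * (Mx w - f w k s))" using cardI[OF k] by simp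
    finally have "fd w k s \<le> 1 / (real N - 1) * ((real N - 1) * (K * (Mx w - f w k s)))"
      unfolding fd_def using N2 by (intro mult_left_mono) auto
    also have "\<dots> = K * (Mx w - f w k s)" using N2 by simp
    finally show ?thesis .
  qed
  have fneg: "f (-w) k s = - f w k s" for w k s unfolding f_def by simp
  have fdneg: "fd (-w) k s = - fd w k s" for w k s
  proof -
    have "(\<Sum>l\<in>I - {k}. psi (norm (x k s - x l s)) * (- f w l s - - f w k s))
        = (\<Sum>l\<in>I - {k}. - (psi (norm (x k s - x l s)) * (f w l s - f w k s)))"
      by (rule sum.cong) (auto simp: algebra_simps)
    then show ?thesis unfolding fd_def fneg sum_negf by simp
  qed
  have iI: "i \<in> I" and jI: "j \<in> I" using i j unfolding I_def by auto
  define C where "C = Mx u + Mx (-u)"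
  define w where "w s = f u i s - f u j s" for s
  have "w t \<le> exp(-K*(t-tb)) * w tb + (1 - exp(-K*(t-tb))) * C"
  proof (rule lin_gronwall[OF ab(2), of w "\<lambda>s. fd u i s - fd u j s"])
    show "continuous_on {tb..t} w" unfolding w_def
      by (intro continuous_intros continuous_on_subset[OF fcont] iI jI) (use ab in auto)
  next
    fix s assume s: "tb < s" "s < t"
    then have s': "a < s" "s < b" using ab by auto
    show "(w has_real_derivative fd u i s - fd u j s) (at s)"
      unfolding w_def[abs_def] by (intro derivative_intros fder iI jI s')
    have "fd u i s \<le> K * (Mx u - f u i s)" by (rule fdbound[OF iI s'])
    moreover have "fd (-u) j s \<le> K * (Mx (-u) - f (-u) j s)" by (rule fdbound[OF jI s'])
    ultimately show "fd u i s - fd u j s \<le> K * (C - w s)"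
      unfolding C_def w_def fdneg fneg by (simp add: algebra_simps)
  qed
  moreover have "C \<le> cs_dV N v a"
  proof -
    have "Mx u \<in> (\<lambda>l. f u l a) ` I" unfolding Mx_def using finI neI by (intro Max_in) auto
    then obtain p where p: "p \<in> I" "Mx u = f u p a" by auto
    have "Mx (-u) \<in> (\<lambda>l. f (-u) l a) ` I" unfolding Mx_def using finI neI by (intro Max_in) auto
    then obtain q where q: "q \<in> I" "Mx (-u) = f (-u) q a" by auto
    have "C = inner (v p a - v q a) u" unfolding C_def p q f_def by (simp add: inner_diff_left)
    also have "\<dots> \<le> norm (v p a - v q a) * norm u" by (rule norm_cauchy_schwarz)
    also have "\<dots> = norm (v p a - v q a)" using u by simp
    also have "\<dots> \<le> cs_dV N v a" unfolding cs_dV_def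
    proof (rule Max_ge)
      have "{norm (v i a - v j a) | i j. i \<in> {1..N} \<and> j \<in> {1..N}}
          = (\<lambda>(i,j). norm (v i a - v j a)) ` ({1..N} \<times> {1..N})" by fastforce
      then show "finite {norm (v i a - v j a) | i j. i \<in> {1..N} \<and> j \<in> {1..N}}" by simp
      show "norm (v p a - v q a) \<in> {norm (v i a - v j a) | i j. i \<in> {1..N} \<and> j \<in> {1..N}}"
        using p q unfolding I_def by blast
    qed
    finally show ?thesis .
  qed
  moreover have "1 - exp(-K*(t-tb)) \<ge> 0" using K0 ab by simp
  ultimately have "w t \<le> exp(-K*(t-tb)) * w tb + (1 - exp(-K*(t-tb))) * cs_dV N v a"
    by (smt (verit) mult_left_mono)
  then show "inner (v i t - v j t) u
             \<le> exp (- K * (t - tb)) * inner (v i tb - v j tb) u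
               + (1 - exp (- K * (t - tb))) * cs_dV N v (ts (2*n))"
    unfolding w_def f_def a_def by (simp add: inner_diff_left)
qed

end
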